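(* Let $N\ge0$, $m\ge1$, $A_0,\dots,A_N\in\mathbb{C}^{n\times n}$. Then $$\mathcal{F}(L_m)\subset\Big\{z\in\mathbb{C}:\ d(\mathcal{F}(A_0),z)\le\sum_{\ell=1}^N\|A_\ell\|\Big\}.$$
   Context: $\|\cdot\|$ is the spectral norm. For $B\in\mathbb{C}^{k\times k}$, $\mathcal{F}(B)=\{x^*Bx:x\in\mathbb{C}^k,\|x\|=1\}$ is the field of values; $d(\mathcal{S},z)$ is the distance from the point $z$ to the closed set $\mathcal{S}$. $L_m\in\mathbb{C}^{mn\times mn}$ is the lower block-triangular block-Toeplitz matrix with $n\times n$ blocks whose $(r,s)$ block equals $A_{r-s}$ if $0\le r-s\le\min(m-1,N)$ and $0$ otherwise. *)

theory Defs
  imports "HOL-Analysis.Analysis" "Jordan_Normal_Form.Matrix"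
begin

definition vnorm :: "complex vec \<Rightarrow> real" where
  "vnorm x = sqrt (\<Sum>i<dim_vec x. (cmod (x $ i))^2)"

definition spec_norm :: "complex mat \<Rightarrow> real" where
  "spec_norm B = Sup {vnorm (B *\<^sub>v x) | x. x \<in> carrier_vec (dim_col B) \<and> vnorm x = 1}"

definition field_of_values :: "complex mat \<Rightarrow> complex set" where
  "field_of_values B = {(\<Sum>i<dim_row B. cnj (x $ i) * (B *\<^sub>v x) $ i) | x.
      x \<in> carrier_vec (dim_row B) \<and> vnorm x = 1}"

text \<open>Lower block-triangular block-Toeplitz matrix L_m with n x n blocks:
  block (r,s) is A (r-s) if 0 \<le> r-s \<le> min (m-1) N, else 0.\<close>
definition block_toeplitz :: "nat \<Rightarrow> nat \<Rightarrow> nat \<Rightarrow> (nat \<Rightarrow> complex mat) \<Rightarrow> complex mat" where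
  "block_toeplitz n m N A = mat (m*n) (m*n) (\<lambda>(i,j).
      let r = i div n; s = j div n in
      if s \<le> r \<and> r - s \<le> min (m-1) N then A (r - s) $$ (i mod n, j mod n) else 0)"

end

theory Submission
  imports Defs
begin



definition sfm :: "nat \<Rightarrow> (nat \<Rightarrow> nat \<Rightarrow> complex) \<Rightarrow> (nat \<Rightarrow> complex) \<Rightarrow> (nat \<Rightarrow> complex) \<Rightarrow> complex" where
  "sfm n M u v = (\<Sum>i<n. cnj (u i) * (\<Sum>j<n. M i j * v j))"

definition ns :: "nat \<Rightarrow> (nat \<Rightarrow> complex) \<Rightarrow> real" where
  "ns n u = (\<Sum>i<n. (cmod (u i))^2)"

lemma sfm_lin_left: "sfm n M (\<lambda>i. a * u i + c * v i) w = cnj a * sfm n M u w + cnj c * sfm n M v w"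
  unfolding sfm_def by (simp add: algebra_simps sum.distrib sum_distrib_left)

lemma sfm_lin_right: "sfm n M w (\<lambda>i. a * u i + c * v i) = a * sfm n M w u + c * sfm n M w v"
proof -
  have "sfm n M w (\<lambda>i. a * u i + c * v i) = (\<Sum>i<n. cnj (w i) * (a * (\<Sum>j<n. M i j * u j) + c * (\<Sum>j<n. M i j * v j)))"
    unfolding sfm_def by (simp add: algebra_simps sum.distrib sum_distrib_left)
  also have "\<dots> = a * sfm n M w u + c * sfm n M w v"
    unfolding sfm_def by (simp add: algebra_simps sum.distrib sum_distrib_left)
  finally show ?thesis .
qed

lemma sfm_quad: "sfm n M (\<lambda>i. a * u i + c * v i) (\<lambda>i. a * u i + c * v i)
   = cnj a * a * sfm n M u u + cnj a * c * sfm n M u v + cnj c * a * sfm n M v u + cnj c * c * sfm n M v v"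
  by (simp add: sfm_lin_left sfm_lin_right algebra_simps)

lemma sfm_scale: "sfm n M (\<lambda>i. a * u i) (\<lambda>i. a * u i) = cnj a * a * sfm n M u u"
  using sfm_quad[of n M a u 0 u] by simp

lemma sfm_cong: "(\<And>i. i < n \<Longrightarrow> u i = u' i) \<Longrightarrow> (\<And>i. i < n \<Longrightarrow> v i = v' i) \<Longrightarrow> sfm n M u v = sfm n M u' v'"
  unfolding sfm_def by (intro sum.cong refl) auto

lemma ns_cong: "(\<And>i. i < n \<Longrightarrow> u i = u' i) \<Longrightarrow> ns n u = ns n u'"
  unfolding ns_def by (intro sum.cong refl) auto

lemma ns_scale: "ns n (\<lambda>i. a * u i) = (cmod a)^2 * ns n u"
  unfolding ns_def by (simp add: norm_mult power_mult_distrib sum_distrib_left)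

lemma ns_nonneg: "ns n u \<ge> 0" unfolding ns_def by (simp add: sum_nonneg)

lemma ns_zero: "ns n u = 0 \<Longrightarrow> i < n \<Longrightarrow> u i = 0"
  unfolding ns_def by (subst (asm) sum_nonneg_eq_0_iff) auto

lemma sfm_zero: "(\<And>i. i < n \<Longrightarrow> u i = 0) \<Longrightarrow> sfm n M u v = 0"
  unfolding sfm_def by simp

lemma sfm_mat_lin: "sfm n (\<lambda>i j. (M i j - a * K i j) / g) u v = (sfm n M u v - a * sfm n K u v) / g"
  unfolding sfm_def by (simp add: algebra_simps sum_divide_distrib sum_subtractf sum_distrib_left diff_divide_distrib)

definition delta :: "nat \<Rightarrow> nat \<Rightarrow> complex" where "delta i j = (if i = j then 1 else 0)"

lemma sfm_delta: "sfm n delta u u = complex_of_real (ns n u)"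
proof -
  have "sfm n delta u u = (\<Sum>i<n. cnj (u i) * u i)"
  proof -
    have "\<And>i. i < n \<Longrightarrow> (\<Sum>j<n. delta i j * u j) = u i"
    proof -
      fix i assume "i < n"
      have "(\<Sum>j<n. delta i j * u j) = (\<Sum>j<n. if i = j then u j else 0)"
        by (intro sum.cong) (auto simp: delta_def)
      also have "\<dots> = u i" using \<open>i < n\<close> by simp
      finally show "(\<Sum>j<n. delta i j * u j) = u i" .
    qed
    then show ?thesis unfolding sfm_def by (intro sum.cong) auto
  qed
  also have "\<dots> = (\<Sum>i<n. complex_of_real ((cmod (u i))^2))"
    by (intro sum.cong refl) (metis complex_norm_square mult.commute of_real_power)
  finally show ?thesis unfolding ns_def by simp
qed




definition W :: "nat \<Rightarrow> (nat \<Rightarrow> nat \<Rightarrow> complex) \<Rightarrow> complex set" where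
  "W n M = {sfm n M x x | x. ns n x = 1}"

lemma cnj_mult_self: "cnj c * c = complex_of_real ((cmod c)^2)"
  by (metis complex_norm_square mult.commute of_real_power)

lemma W_scale:
  assumes "ns n y > 0"
  shows "sfm n M y y / complex_of_real (ns n y) \<in> W n M"
proof -
  define c where "c = complex_of_real (1 / sqrt (ns n y))"
  have cc: "(cmod c)^2 = 1 / ns n y" using assms
    by (simp add: c_def norm_divide power_divide)
  have "ns n (\<lambda>i. c * y i) = 1" using assms by (simp add: ns_scale cc)
  moreover have "sfm n M (\<lambda>i. c * y i) (\<lambda>i. c * y i) = sfm n M y y / complex_of_real (ns n y)"
  proof -
    have "cnj c * c = complex_of_real (1 / ns n y)" by (simp add: cnj_mult_self cc)
    then show ?thesis by (simp add: sfm_scale field_simps)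
  qed
  ultimately show ?thesis unfolding W_def by (metis (mono_tags, lifting) mem_Collect_eq)
qed

lemma W_convex: "convex (W n M)"
  unfolding convex_def
proof (intro ballI allI impI)
  fix p q :: complex and a b :: real
  assume pW: "p \<in> W n M" and qW: "q \<in> W n M" and ab: "0 \<le> a" "0 \<le> b" "a + b = 1"
  obtain x where x: "ns n x = 1" "p = sfm n M x x" using pW unfolding W_def by auto
  obtain y where y: "ns n y = 1" "q = sfm n M y y" using qW unfolding W_def by auto
  show "a *\<^sub>R p + b *\<^sub>R q \<in> W n M"
  proof (cases "p = q")
    case True
    then have "a *\<^sub>R p + b *\<^sub>R q = p" using ab by (simp add: scaleR_left_distrib[symmetric])
    then show ?thesis using pW by simp
  next
    case False
    define g where "g = q - p"
    have g0: "g \<noteq> 0" using False by (simp add: g_def)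
    define M' where "M' = (\<lambda>i j. (M i j - p * delta i j) / g)"
    define Q where "Q = (\<lambda>z. sfm n M' z z)"
    have Qe: "Q z = (sfm n M z z - p * complex_of_real (ns n z)) / g" for z
      unfolding Q_def M'_def sfm_mat_lin sfm_delta ..
    have Qx: "Q x = 0" using x by (simp add: Qe)
    have Qy: "Q y = 1" using y g0 by (simp add: Qe g_def)
    have Qx': "sfm n M' x x = 0" using Qx by (simp add: Q_def)
    have Qy': "sfm n M' y y = 1" using Qy by (simp add: Q_def)
    define P where "P = sfm n M' x y"
    define R where "R = sfm n M' y x"
    define d where "d = R - cnj P"
    define u where "u = (if d = 0 then 1 else cnj d / complex_of_real (cmod d))"
    have u1: "cmod u = 1" by (simp add: u_def norm_divide)
    have "u * d = complex_of_real (cmod d)"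
      by (simp add: u_def cnj_mult_self power2_eq_square)
    then have imd: "Im (u * d) = 0" by simp
    define C where "C = cnj u * P + u * R"
    have imC: "Im C = 0"
    proof -
      have "Im C = Im (u * d)" unfolding C_def d_def by (simp add: algebra_simps)
      then show ?thesis using imd by simp
    qed
    define z where "z = (\<lambda>t::real. \<lambda>i. (complex_of_real (1 - t) * u) * x i + complex_of_real t * y i)"
    have Qz: "Q (z t) = complex_of_real (t * (1 - t)) * C + complex_of_real (t^2)" for t
      unfolding Q_def z_def sfm_quad
      by (simp add: Qx' Qy' P_def[symmetric] R_def[symmetric] C_def algebra_simps power2_eq_square)
    define phi where "phi = (\<lambda>t. Re (Q (z t)) - b * ns n (z t))"
    have cont: "continuous_on {0..1} phi"
      unfolding phi_def Qz unfolding z_def ns_def by (intro continuous_intros)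
    have z0: "ns n (z 0) = 1"
      by (simp add: z_def ns_scale u1 x)
    have z1: "z 1 = y" by (simp add: z_def)
    have "phi 0 \<le> 0" using ab by (simp add: phi_def Qz z0)
    moreover have "0 \<le> phi 1" using ab y by (simp add: phi_def Qz z1)
    ultimately obtain t where t: "0 \<le> t" "t \<le> 1" "phi t = 0"
      using IVT'[of phi 0 0 1] cont by auto
    have nspos: "ns n (z t) > 0"
    proof (rule ccontr)
      assume "\<not> ns n (z t) > 0"
      then have zz: "ns n (z t) = 0" using ns_nonneg[of n "z t"] by linarith
      have t0: "t \<noteq> 0" using zz z0 by auto
      define c where "c = - (complex_of_real (1 - t) * u) / complex_of_real t"
      have yc: "y i = c * x i" if "i < n" for i
      proof -
        have "z t i = 0" using ns_zero[OF zz that] .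
        then show ?thesis using t0 unfolding z_def c_def by (simp add: field_simps add_eq_0_iff)
      qed
      have "ns n y = (cmod c)^2 * ns n x" using ns_cong[of n y "\<lambda>i. c * x i"] yc by (simp add: ns_scale)
      then have cc: "(cmod c)^2 = 1" using x y by simp
      have "q = sfm n M (\<lambda>i. c * x i) (\<lambda>i. c * x i)" using y(2) sfm_cong[of n y "\<lambda>i. c * x i" y "\<lambda>i. c * x i" M] yc by simp
      also have "\<dots> = p" by (simp add: sfm_scale cnj_mult_self cc x)
      finally show False using False by simp
    qed
    have imQ: "Im (Q (z t)) = 0" by (simp add: Qz imC)
    have "Re (Q (z t)) = b * ns n (z t)" using t(3) by (simp add: phi_def)
    then have QQ: "Q (z t) = complex_of_real (b * ns n (z t))" using imQ by (simp add: complex_eq_iff)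
    have "sfm n M (z t) (z t) = (p + g * b) * complex_of_real (ns n (z t))"
      using QQ g0 unfolding Qe by (simp add: field_simps)
    then have "sfm n M (z t) (z t) / complex_of_real (ns n (z t)) = p + g * b"
      using nspos by simp
    also have "\<dots> = a *\<^sub>R p + b *\<^sub>R q"
    proof -
      have a: "a = 1 - b" using ab by simp
      show ?thesis by (simp add: a g_def scaleR_conv_of_real algebra_simps)
    qed
    finally show ?thesis using W_scale[OF nspos, of M] by simp
  qed
qed




lemma cs_sum:
  fixes a b :: "nat \<Rightarrow> complex"
  shows "cmod (\<Sum>i\<in>I. a i * b i) \<le> sqrt (\<Sum>i\<in>I. (cmod (a i))^2) * sqrt (\<Sum>i\<in>I. (cmod (b i))^2)"
proof -
  have "cmod (\<Sum>i\<in>I. a i * b i) \<le> (\<Sum>i\<in>I. cmod (a i) * cmod (b i))"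
    by (metis (no_types, lifting) norm_mult norm_sum sum.cong)
  also have "\<dots> = sqrt ((\<Sum>i\<in>I. cmod (a i) * cmod (b i))^2)"
    by (simp add: sum_nonneg)
  also have "\<dots> \<le> sqrt ((\<Sum>i\<in>I. (cmod (a i))^2) * (\<Sum>i\<in>I. (cmod (b i))^2))"
    by (rule real_sqrt_le_mono, rule Cauchy_Schwarz_ineq_sum)
  also have "\<dots> = sqrt (\<Sum>i\<in>I. (cmod (a i))^2) * sqrt (\<Sum>i\<in>I. (cmod (b i))^2)"
    by (simp add: real_sqrt_mult)
  finally show ?thesis .
qed

lemma cs_ns: "cmod (\<Sum>i<n. cnj (u i) * w i) \<le> sqrt (ns n u) * sqrt (ns n w)"
  using cs_sum[of "\<lambda>i. cnj (u i)" w "{..<n}"] unfolding ns_def by simp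

definition Bv :: "nat \<Rightarrow> complex mat \<Rightarrow> (nat \<Rightarrow> complex) \<Rightarrow> nat \<Rightarrow> complex" where
  "Bv n B v = (\<lambda>i. \<Sum>j<n. B $$ (i, j) * v j)"

lemma mult_vec_idx:
  assumes "B \<in> carrier_mat n n" "x \<in> carrier_vec n" "i < n"
  shows "(B *\<^sub>v x) $ i = Bv n B (\<lambda>j. x $ j) i"
  using assms unfolding Bv_def
  by (simp add: scalar_prod_def atLeast0LessThan)

lemma vnorm_ns: "x \<in> carrier_vec n \<Longrightarrow> vnorm x = sqrt (ns n (\<lambda>i. x $ i))"
  unfolding vnorm_def ns_def by simp

lemma vnorm_mult: "B \<in> carrier_mat n n \<Longrightarrow> x \<in> carrier_vec n \<Longrightarrow>
   vnorm (B *\<^sub>v x) = sqrt (ns n (Bv n B (\<lambda>j. x $ j)))"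
proof -
  assume B: "B \<in> carrier_mat n n" and x: "x \<in> carrier_vec n"
  have "B *\<^sub>v x \<in> carrier_vec n" using B x by simp
  then have "vnorm (B *\<^sub>v x) = sqrt (ns n (\<lambda>i. (B *\<^sub>v x) $ i))" by (rule vnorm_ns)
  also have "ns n (\<lambda>i. (B *\<^sub>v x) $ i) = ns n (Bv n B (\<lambda>j. x $ j))"
    by (rule ns_cong) (simp add: mult_vec_idx[OF B x])
  finally show ?thesis .
qed

lemma Bv_bound:
  assumes "ns n x = 1"
  shows "sqrt (ns n (Bv n B x)) \<le> sqrt (\<Sum>i<n. \<Sum>j<n. (cmod (B $$ (i, j)))^2)"
proof -
  have "(cmod (Bv n B x i))^2 \<le> (\<Sum>j<n. (cmod (B $$ (i, j)))^2)" for i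
  proof -
    have "cmod (Bv n B x i) \<le> sqrt (\<Sum>j<n. (cmod (B $$ (i, j)))^2) * sqrt (ns n x)"
      unfolding Bv_def ns_def by (rule cs_sum)
    then have "cmod (Bv n B x i) \<le> sqrt (\<Sum>j<n. (cmod (B $$ (i, j)))^2)" using assms by simp
    then show ?thesis
      by (metis norm_ge_zero power_mono real_sqrt_pow2 sum_nonneg zero_le_power2)
  qed
  then show ?thesis unfolding ns_def by (intro real_sqrt_le_mono sum_mono) auto
qed

lemma spec_bdd:
  assumes "B \<in> carrier_mat n n"
  shows "bdd_above {vnorm (B *\<^sub>v x) | x. x \<in> carrier_vec (dim_col B) \<and> vnorm x = 1}"
proof (rule bdd_aboveI)
  fix r assume "r \<in> {vnorm (B *\<^sub>v x) | x. x \<in> carrier_vec (dim_col B) \<and> vnorm x = 1}"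
  then obtain x where x: "x \<in> carrier_vec n" "vnorm x = 1" "r = vnorm (B *\<^sub>v x)" using assms by auto
  have "ns n (\<lambda>j. x $ j) = 1" using x vnorm_ns[OF x(1)] by simp
  then show "r \<le> sqrt (\<Sum>i<n. \<Sum>j<n. (cmod (B $$ (i, j)))^2)"
    using Bv_bound vnorm_mult[OF assms x(1)] x(3) by simp
qed

lemma spec_bound:
  assumes B: "B \<in> carrier_mat n n"
  shows "sqrt (ns n (Bv n B v)) \<le> spec_norm B * sqrt (ns n v)"
proof (cases "ns n v = 0")
  case True
  then have "ns n (Bv n B v) = 0" unfolding ns_def Bv_def using ns_zero[OF True] by simp
  then show ?thesis using True by simp
next
  case False
  then have pos: "ns n v > 0" using ns_nonneg[of n v] by linarith
  define c where "c = sqrt (ns n v)"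
  have c: "c > 0" using pos by (simp add: c_def)
  define x where "x = vec n (\<lambda>i. complex_of_real (1 / c) * v i)"
  have xc: "x \<in> carrier_vec n" by (simp add: x_def)
  have "ns n (\<lambda>i. x $ i) = ns n (\<lambda>i. complex_of_real (1 / c) * v i)"
    by (rule ns_cong) (simp add: x_def)
  also have "\<dots> = 1" using pos c unfolding ns_scale by (simp add: c_def power_divide norm_divide)
  finally have xn: "vnorm x = 1" using vnorm_ns[OF xc] by simp
  have "ns n (Bv n B (\<lambda>j. x $ j)) = ns n (\<lambda>i. complex_of_real (1 / c) * Bv n B v i)"
    by (rule ns_cong) (simp add: x_def Bv_def sum_distrib_left algebra_simps)
  also have "\<dots> = ns n (Bv n B v) / c^2" unfolding ns_scale using c by (simp add: power_divide norm_divide)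
  finally have "vnorm (B *\<^sub>v x) = sqrt (ns n (Bv n B v)) / c"
    using vnorm_mult[OF B xc] c by (simp add: real_sqrt_divide)
  moreover have "vnorm (B *\<^sub>v x) \<le> spec_norm B"
    unfolding spec_norm_def
    by (rule cSup_upper[OF _ spec_bdd[OF B]]) (use xc xn B in auto)
  ultimately have "sqrt (ns n (Bv n B v)) / c \<le> spec_norm B" by simp
  then show ?thesis using c by (simp add: c_def[symmetric] pos_divide_le_eq)
qed

lemma spec_nonneg:
  assumes B: "B \<in> carrier_mat n n" and n: "n > 0"
  shows "spec_norm B \<ge> 0"
proof -
  define x where "x = vec n (\<lambda>i. if i = 0 then (1::complex) else 0)"
  have xc: "x \<in> carrier_vec n" by (simp add: x_def)
  have "ns n (\<lambda>i. x $ i) = (\<Sum>i<n. if i = 0 then 1 else 0)"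
    unfolding ns_def by (intro sum.cong) (auto simp: x_def)
  also have "\<dots> = 1" using n by simp
  finally have xn: "vnorm x = 1" using vnorm_ns[OF xc] by simp
  have "vnorm (B *\<^sub>v x) \<le> spec_norm B"
    unfolding spec_norm_def
    by (rule cSup_upper[OF _ spec_bdd[OF B]]) (use xc xn B in auto)
  moreover have "vnorm (B *\<^sub>v x) \<ge> 0" unfolding vnorm_def by (simp add: sum_nonneg)
  ultimately show ?thesis by linarith
qed

lemma sfm_bound:
  assumes B: "B \<in> carrier_mat n n"
  shows "cmod (sfm n (\<lambda>i j. B $$ (i, j)) u v) \<le> spec_norm B * (sqrt (ns n u) * sqrt (ns n v))"
proof -
  have "sfm n (\<lambda>i j. B $$ (i, j)) u v = (\<Sum>i<n. cnj (u i) * Bv n B v i)"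
    unfolding sfm_def Bv_def ..
  then have "cmod (sfm n (\<lambda>i j. B $$ (i, j)) u v) \<le> sqrt (ns n u) * sqrt (ns n (Bv n B v))"
    using cs_ns by simp
  also have "\<dots> \<le> sqrt (ns n u) * (spec_norm B * sqrt (ns n v))"
    by (rule mult_left_mono[OF spec_bound[OF B]]) (simp add: ns_nonneg)
  finally show ?thesis by (simp add: algebra_simps)
qed

lemma fov_eq:
  assumes B: "B \<in> carrier_mat n n"
  shows "field_of_values B = W n (\<lambda>i j. B $$ (i, j))"
proof
  show "field_of_values B \<subseteq> W n (\<lambda>i j. B $$ (i, j))"
  proof
    fix z assume "z \<in> field_of_values B"
    then obtain x where x: "x \<in> carrier_vec n" "vnorm x = 1"
      "z = (\<Sum>i<n. cnj (x $ i) * (B *\<^sub>v x) $ i)" using B unfolding field_of_values_def by auto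
    have "ns n (\<lambda>i. x $ i) = 1" using x vnorm_ns[OF x(1)] by simp
    moreover have "z = sfm n (\<lambda>i j. B $$ (i, j)) (\<lambda>i. x $ i) (\<lambda>i. x $ i)"
      unfolding x(3) sfm_def by (intro sum.cong refl) (simp add: mult_vec_idx[OF B x(1)] Bv_def)
    ultimately show "z \<in> W n (\<lambda>i j. B $$ (i, j))" unfolding W_def by blast
  qed
next
  show "W n (\<lambda>i j. B $$ (i, j)) \<subseteq> field_of_values B"
  proof
    fix z assume "z \<in> W n (\<lambda>i j. B $$ (i, j))"
    then obtain f where f: "ns n f = 1" "z = sfm n (\<lambda>i j. B $$ (i, j)) f f" unfolding W_def by auto
    define x where "x = vec n f"
    have xc: "x \<in> carrier_vec n" by (simp add: x_def)
    have "ns n (\<lambda>i. x $ i) = 1" using f by (simp add: x_def ns_cong[of n "\<lambda>i. vec n f $ i" f])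
    then have xn: "vnorm x = 1" using vnorm_ns[OF xc] by simp
    have "z = (\<Sum>i<n. cnj (x $ i) * (B *\<^sub>v x) $ i)"
      unfolding f(2) sfm_def by (intro sum.cong refl) (simp add: mult_vec_idx[OF B xc, unfolded x_def] Bv_def x_def)
    then show "z \<in> field_of_values B" unfolding field_of_values_def using B xc xn by auto
  qed
qed




lemma sum_blocks: fixes f :: "nat \<Rightarrow> 'a::comm_monoid_add" shows "(\<Sum>i<m*n. f i) = (\<Sum>r<m. \<Sum>j<n. f (r*n+j))"
proof -
  have "(\<Sum>i<m*n. f i) = (\<Sum>r<m. sum f {r*n..<r*n+n})" using sum.nat_group[where g=f and k=n and n=m] by simp
  also have "\<dots> = (\<Sum>r<m. \<Sum>j<n. f (r*n+j))"
  proof (rule sum.cong[OF refl])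
    fix r assume "r \<in> {..<m}"
    have "sum f {0 + r*n..<n + r*n} = (\<Sum>j\<in>{0..<n}. f (j + r*n))" by (rule sum.shift_bounds_nat_ivl)
    then show "sum f {r*n..<r*n+n} = (\<Sum>j<n. f (r*n+j))" by (simp add: atLeast0LessThan add.commute)
  qed
  finally show ?thesis .
qed

lemma blk_lt: "r < m \<Longrightarrow> j < (n::nat) \<Longrightarrow> r*n+j < m*n"
proof -
  assume "r < m" "j < n"
  then have "r*n + j < r*n + n" by simp
  also have "\<dots> = Suc r * n" by simp
  also have "\<dots> \<le> m*n" using \<open>r < m\<close> by (intro mult_right_mono) auto
  finally show ?thesis .
qed

lemma reindex_bound:
  fixes f :: "nat \<Rightarrow> real" and g :: "nat \<Rightarrow> nat"
  assumes "finite P" "inj_on g P" "g ` P \<subseteq> {1..N}" "\<And>l. l \<in> {1..N} \<Longrightarrow> f l \<ge> 0"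
  shows "(\<Sum>x\<in>P. f (g x)) \<le> (\<Sum>l=1..N. f l)"
proof -
  have "(\<Sum>x\<in>P. f (g x)) = (\<Sum>l\<in>g ` P. f l)" using sum.reindex[OF assms(2), of f] by (simp add: comp_def)
  also have "\<dots> \<le> (\<Sum>l=1..N. f l)" by (rule sum_mono2) (use assms in auto)
  finally show ?thesis .
qed

lemma inner1:
  fixes f :: "nat \<Rightarrow> real"
  assumes "\<And>l. l \<in> {1..N} \<Longrightarrow> f l \<ge> 0"
  shows "(\<Sum>s<m. if s < r \<and> r - s \<le> N then f (r - s) else 0) \<le> (\<Sum>l=1..N. f l)"
proof -
  have "(\<Sum>s<m. if s < r \<and> r - s \<le> N then f (r - s) else 0) = (\<Sum>s\<in>{s. s < m \<and> s < r \<and> r - s \<le> N}. f (r - s))"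
    by (simp add: sum.inter_filter[symmetric])
  also have "\<dots> \<le> (\<Sum>l=1..N. f l)"
    by (rule reindex_bound) (auto simp: inj_on_def assms)
  finally show ?thesis .
qed

lemma inner2:
  fixes f :: "nat \<Rightarrow> real"
  assumes "\<And>l. l \<in> {1..N} \<Longrightarrow> f l \<ge> 0"
  shows "(\<Sum>r<m. if s < r \<and> r - s \<le> N then f (r - s) else 0) \<le> (\<Sum>l=1..N. f l)"
proof -
  have "(\<Sum>r<m. if s < r \<and> r - s \<le> N then f (r - s) else 0) = (\<Sum>r\<in>{r. r < m \<and> s < r \<and> r - s \<le> N}. f (r - s))"
    by (simp add: sum.inter_filter[symmetric])
  also have "\<dots> \<le> (\<Sum>l=1..N. f l)"
    by (rule reindex_bound) (auto simp: inj_on_def assms)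
  finally show ?thesis .
qed




lemma sum_if_zero: "(\<Sum>k\<in>K. (if P then f k else 0)) = (if P then sum f K else (0::'a::comm_monoid_add))"
  by simp

lemma if_times0: "(if P then a else 0) * (b::'a::mult_zero) = (if P then a * b else 0)" by simp

lemma amgm: "0 \<le> a \<Longrightarrow> 0 \<le> b \<Longrightarrow> sqrt a * sqrt b \<le> (a + b) / (2::real)"
proof -
  assume "0 \<le> a" "0 \<le> b"
  have "0 \<le> (sqrt a - sqrt b)^2" by simp
  then show ?thesis using \<open>0 \<le> a\<close> \<open>0 \<le> b\<close> by (simp add: power2_eq_square algebra_simps)
qed

theorem mainTheorem8:
  fixes n m N :: nat and A :: "nat \<Rightarrow> complex mat"
  assumes "m \<ge> 1"
    and "\<And>l. l \<le> N \<Longrightarrow> A l \<in> carrier_mat n n"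
  shows "field_of_values (block_toeplitz n m N A) \<subseteq>
           {z. infdist z (field_of_values (A 0)) \<le> (\<Sum>l=1..N. spec_norm (A l))}"
proof
  fix z assume zF: "z \<in> field_of_values (block_toeplitz n m N A)"
  define L where "L = block_toeplitz n m N A"
  have Lc: "L \<in> carrier_mat (m*n) (m*n)" by (simp add: L_def block_toeplitz_def)
  from zF fov_eq[OF Lc] obtain x where x: "ns (m*n) x = 1" "z = sfm (m*n) (\<lambda>i j. L $$ (i,j)) x x"
    unfolding W_def L_def by auto
  have n0: "n > 0"
  proof (rule ccontr)
    assume "\<not> n > 0" then have "n = 0" by simp
    then show False using x(1) by (simp add: ns_def)
  qed
  define xb where "xb = (\<lambda>r j. x (r*n+j))"
  define Am where "Am = (\<lambda>l i j. A l $$ (i,j))"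
  define a where "a = (\<lambda>r. ns n (xb r))"
  define K where "K = (\<Sum>l=1..N. spec_norm (A l))"
  have a0: "a r \<ge> 0" for r unfolding a_def by (rule ns_nonneg)
  have Lidx: "L $$ (r*n+j, s*n+k) = (if s \<le> r \<and> r - s \<le> N then A (r-s) $$ (j,k) else 0)"
    if "r < m" "s < m" "j < n" "k < n" for r s j k
  proof -
    have d1: "(r*n+j) div n = r" "(r*n+j) mod n = j" using that n0 by auto
    have d2: "(s*n+k) div n = s" "(s*n+k) mod n = k" using that n0 by auto
    have "(s \<le> r \<and> r - s \<le> min (m-1) N) = (s \<le> r \<and> r - s \<le> N)" using that by auto
    then show ?thesis
      unfolding L_def block_toeplitz_def using blk_lt[OF that(1,3)] blk_lt[OF that(2,4)] d1 d2
      by (simp add: Let_def)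
  qed
  have nsum: "(\<Sum>r<m. a r) = 1"
    using x(1) unfolding ns_def a_def xb_def by (simp only: sum_blocks)
  define T where "T = (\<lambda>r s. if s \<le> r \<and> r - s \<le> N then sfm n (Am (r-s)) (xb r) (xb s) else 0)"
  have "z = (\<Sum>r<m. \<Sum>j<n. cnj (xb r j) * (\<Sum>s<m. \<Sum>k<n. L $$ (r*n+j, s*n+k) * xb s k))"
    unfolding x(2) sfm_def xb_def by (simp only: sum_blocks)
  also have "\<dots> = (\<Sum>r<m. \<Sum>j<n. cnj (xb r j) * (\<Sum>s<m. if s \<le> r \<and> r - s \<le> N then (\<Sum>k<n. Am (r-s) j k * xb s k) else 0))"
    by (intro sum.cong refl) (simp add: Lidx Am_def if_times0 sum_if_zero cong: if_cong)
  also have "\<dots> = (\<Sum>r<m. \<Sum>s<m. T r s)"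
  proof (rule sum.cong[OF refl])
    fix r assume "r \<in> {..<m}"
    have "(\<Sum>j<n. cnj (xb r j) * (\<Sum>s<m. if s \<le> r \<and> r - s \<le> N then (\<Sum>k<n. Am (r-s) j k * xb s k) else 0))
        = (\<Sum>j<n. \<Sum>s<m. cnj (xb r j) * (if s \<le> r \<and> r - s \<le> N then (\<Sum>k<n. Am (r-s) j k * xb s k) else 0))"
      by (simp add: sum_distrib_left)
    also have "\<dots> = (\<Sum>s<m. \<Sum>j<n. cnj (xb r j) * (if s \<le> r \<and> r - s \<le> N then (\<Sum>k<n. Am (r-s) j k * xb s k) else 0))"
      by (rule sum.swap)
    also have "\<dots> = (\<Sum>s<m. T r s)"
      unfolding T_def sfm_def by (intro sum.cong refl) auto
    finally show "(\<Sum>j<n. cnj (xb r j) * (\<Sum>s<m. if s \<le> r \<and> r - s \<le> N then (\<Sum>k<n. Am (r-s) j k * xb s k) else 0)) = (\<Sum>s<m. T r s)" .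
  qed
  finally have zT: "z = (\<Sum>r<m. \<Sum>s<m. T r s)" .
  define D where "D = (\<Sum>r<m. sfm n (Am 0) (xb r) (xb r))"
  define E where "E = (\<Sum>r<m. \<Sum>s<m. if s < r \<and> r - s \<le> N then sfm n (Am (r-s)) (xb r) (xb s) else 0)"
  have zDE: "z = D + E"
  proof -
    have "(\<Sum>s<m. T r s) = sfm n (Am 0) (xb r) (xb r) + (\<Sum>s<m. if s < r \<and> r - s \<le> N then sfm n (Am (r-s)) (xb r) (xb s) else 0)"
      if "r < m" for r
    proof -
      have "T r s = (if r = s then sfm n (Am 0) (xb r) (xb r) else 0) + (if s < r \<and> r - s \<le> N then sfm n (Am (r-s)) (xb r) (xb s) else 0)" for s
        unfolding T_def by auto
      then show ?thesis using that by (simp add: sum.distrib)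
    qed
    then show ?thesis unfolding zT D_def E_def by (simp add: sum.distrib)
  qed
  have DW: "D \<in> field_of_values (A 0)"
  proof -
    have FA: "field_of_values (A 0) = W n (Am 0)"
      unfolding Am_def by (rule fov_eq) (use assms(2) in auto)
    define S where "S = {r \<in> {..<m}. a r > 0}"
    have finS: "finite S" by (simp add: S_def)
    have Ssub: "S \<subseteq> {..<m}" by (auto simp: S_def)
    have zero_a: "a r = 0" if "r \<in> {..<m} - S" for r
      using that a0[of r] unfolding S_def by auto
    have zero_s: "sfm n (Am 0) (xb r) (xb r) = 0" if "r \<in> {..<m} - S" for r
    proof -
      have "ns n (xb r) = 0" using zero_a[OF that] by (simp add: a_def)
      then show ?thesis by (intro sfm_zero) (rule ns_zero)
    qed
    have D2: "D = (\<Sum>r\<in>S. a r *\<^sub>R (sfm n (Am 0) (xb r) (xb r) / complex_of_real (a r)))"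
    proof -
      have "D = (\<Sum>r\<in>S. sfm n (Am 0) (xb r) (xb r))"
        unfolding D_def by (rule sum.mono_neutral_right[OF _ Ssub]) (use zero_s in blast)+
      also have "\<dots> = (\<Sum>r\<in>S. a r *\<^sub>R (sfm n (Am 0) (xb r) (xb r) / complex_of_real (a r)))"
      proof (rule sum.cong[OF refl])
        fix r assume "r \<in> S"
        then have "a r > 0" by (simp add: S_def)
        then show "sfm n (Am 0) (xb r) (xb r) = a r *\<^sub>R (sfm n (Am 0) (xb r) (xb r) / complex_of_real (a r))"
          by (simp add: scaleR_conv_of_real)
      qed
      finally show ?thesis .
    qed
    have S1: "(\<Sum>r\<in>S. a r) = 1"
    proof -
      have "(\<Sum>r<m. a r) = (\<Sum>r\<in>S. a r)"
        by (rule sum.mono_neutral_right[OF _ Ssub]) (use zero_a in blast)+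
      then show ?thesis using nsum by simp
    qed
    have inW: "sfm n (Am 0) (xb r) (xb r) / complex_of_real (a r) \<in> W n (Am 0)" if "r \<in> S" for r
    proof -
      have "ns n (xb r) > 0" using that by (simp add: S_def a_def)
      from W_scale[OF this, of "Am 0"] show ?thesis by (simp add: a_def)
    qed
    have "D \<in> W n (Am 0)"
      unfolding D2 by (rule convex_sum[OF finS W_convex S1 a0 inW])
    then show ?thesis using FA by simp
  qed
  have specnn: "spec_norm (A l) \<ge> 0" if "l \<le> N" for l
    using spec_nonneg[OF assms(2)[OF that] n0] .
  have Ebound: "cmod E \<le> K"
  proof -
    define U where "U = (\<lambda>r s. if s < r \<and> r - s \<le> N then spec_norm (A (r-s)) * a r else 0)"
    define V where "V = (\<lambda>r s. if s < r \<and> r - s \<le> N then spec_norm (A (r-s)) * a s else 0)"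
    have trm: "cmod (if s < r \<and> r - s \<le> N then sfm n (Am (r-s)) (xb r) (xb s) else 0) \<le> (U r s + V r s) / 2" for r s
    proof (cases "s < r \<and> r - s \<le> N")
      case True
      have "cmod (sfm n (Am (r-s)) (xb r) (xb s)) \<le> spec_norm (A (r-s)) * (sqrt (a r) * sqrt (a s))"
        unfolding Am_def a_def by (rule sfm_bound) (use assms(2) True in auto)
      also have "\<dots> \<le> spec_norm (A (r-s)) * ((a r + a s) / 2)"
        by (rule mult_left_mono[OF amgm[OF a0 a0]]) (use specnn True in auto)
      finally show ?thesis using True by (simp add: U_def V_def algebra_simps add_divide_distrib)
    qed (auto simp: U_def V_def)
    have "cmod E \<le> (\<Sum>r<m. \<Sum>s<m. cmod (if s < r \<and> r - s \<le> N then sfm n (Am (r-s)) (xb r) (xb s) else 0))"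
      unfolding E_def by (rule order_trans[OF norm_sum sum_mono[OF norm_sum]])
    also have "\<dots> \<le> (\<Sum>r<m. \<Sum>s<m. (U r s + V r s) / 2)"
      by (intro sum_mono trm)
    also have "\<dots> = ((\<Sum>r<m. \<Sum>s<m. U r s) + (\<Sum>s<m. \<Sum>r<m. V r s)) / 2"
    proof -
      have "(\<Sum>r<m. \<Sum>s<m. (U r s + V r s) / 2) = ((\<Sum>r<m. \<Sum>s<m. U r s) + (\<Sum>r<m. \<Sum>s<m. V r s)) / 2"
        by (simp add: sum.distrib sum_divide_distrib[symmetric])
      moreover have "(\<Sum>r<m. \<Sum>s<m. V r s) = (\<Sum>s<m. \<Sum>r<m. V r s)" by (rule sum.swap)
      ultimately show ?thesis by simp
    qed
    also have "\<dots> \<le> (K + K) / 2"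
    proof -
      have fnn: "\<And>l. l \<in> {1..N} \<Longrightarrow> spec_norm (A l) \<ge> 0" using specnn by auto
      have "(\<Sum>r<m. \<Sum>s<m. U r s) = (\<Sum>r<m. a r * (\<Sum>s<m. if s < r \<and> r - s \<le> N then spec_norm (A (r-s)) else 0))"
        unfolding U_def by (simp add: sum_distrib_left if_distrib mult.commute cong: if_cong)
      also have "\<dots> \<le> (\<Sum>r<m. a r * K)"
        unfolding K_def by (intro sum_mono mult_left_mono inner1 a0 fnn)
      also have "\<dots> = K" using nsum by (simp add: sum_distrib_right[symmetric])
      finally have 1: "(\<Sum>r<m. \<Sum>s<m. U r s) \<le> K" .
      have "(\<Sum>s<m. \<Sum>r<m. V r s) = (\<Sum>s<m. a s * (\<Sum>r<m. if s < r \<and> r - s \<le> N then spec_norm (A (r-s)) else 0))"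
        unfolding V_def by (simp add: sum_distrib_left if_distrib mult.commute cong: if_cong)
      also have "\<dots> \<le> (\<Sum>s<m. a s * K)"
        unfolding K_def by (intro sum_mono mult_left_mono inner2 a0 fnn)
      also have "\<dots> = K" using nsum by (simp add: sum_distrib_right[symmetric])
      finally have 2: "(\<Sum>s<m. \<Sum>r<m. V r s) \<le> K" .
      show ?thesis using 1 2 by simp
    qed
    finally show ?thesis by simp
  qed
  have "infdist z (field_of_values (A 0)) \<le> dist z D" by (rule infdist_le[OF DW])
  also have "\<dots> = cmod E" using zDE by (simp add: dist_norm)
  also have "\<dots> \<le> K" by (rule Ebound)
  finally show "z \<in> {z. infdist z (field_of_values (A 0)) \<le> (\<Sum>l=1..N. spec_norm (A l))}"
    by (simp add: K_def)
qed


end
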